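(* Under the hypotheses and notation of the setting below, for all $i\ge1$ the annulus $\mathcal A_i=\mathcal B_i\setminus\overline{\mathcal B_{i+1}}$ satisfies $$\frac{g_v}{(d-1)^i}\le\mathrm{mod}(\mathcal A_i)\le\frac{(d-1)g_v}{2^{i+1}},$$ and the annulus $\mathcal A_0=\mathcal B(0,e^{g_v})^-\setminus\mathcal B_1$ satisfies $g_v\le\mathrm{mod}(\mathcal A_0)\le (d-1)g_v/2$.
   Context: Setting: $K$ a number field or a finite extension of $k(t)$ ($k$ algebraically closed, characteristic $0$); $f\in K[z]$ monic of degree $d\ge3$ with $0$ a superattracting fixed point; $v$ a nonarchimedean place of bad reduction not lying above any prime integer $\le d$; $g_v$ the splitting radius of $f$ at $v$ (log of the radius of the smallest closed disk $\{\hat\lambda_v\le g\}$ that is still a single disk, where $\hat\lambda_v(z)=\lim d^{-n}\log^+|f^n(z)|_v$). $\mathcal B_1$ is the disk component of $f^{-1}(\mathcal B(0,e^{g_v}))$ containing $0$, and $\mathcal B_i$ ($i\ge2$) the disk component of $f^{-(i-1)}(\mathcal B_1)$ containing $0$. $\mathcal B(a,R)^-=\{x:[T-a]_x<R\}$ denotes the open Berkovich disk. For an annulus $\mathcal B\setminus\mathcal B'$, $\mathrm{mod}=\log\delta_v(\mathcal B,\mathcal B)-\log\delta_v(\mathcal B',\mathcal B')$, $\delta_v$ the Hsia kernel relative to $\infty$. *)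

theory Defs
  imports "HOL-Computational_Algebra.Computational_Algebra"
begin

text \<open>A nonarchimedean absolute value on a field (a representative of a nonarchimedean place).\<close>
definition nonarch_abs :: "('a::field \<Rightarrow> real) \<Rightarrow> bool" where
  "nonarch_abs w \<longleftrightarrow> w 0 = 0 \<and> (\<forall>x. x \<noteq> 0 \<longrightarrow> w x > 0) \<and>
     (\<forall>x y. w (x * y) = w x * w y) \<and> (\<forall>x y. w (x + y) \<le> max (w x) (w y))"

definition nonarch_place :: "('a::field \<Rightarrow> real) \<Rightarrow> bool" where
  "nonarch_place w \<longleftrightarrow> nonarch_abs w \<and> (\<exists>x. w x \<noteq> 0 \<and> w x \<noteq> 1)"

definition not_above_small_primes :: "('a::field \<Rightarrow> real) \<Rightarrow> nat \<Rightarrow> bool" where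
  "not_above_small_primes w d \<longleftrightarrow> (\<forall>p::nat. prime p \<and> p \<le> d \<longrightarrow> w (of_nat p) = 1)"

definition number_field :: "'a::field_char_0 itself \<Rightarrow> bool" where
  "number_field _ \<longleftrightarrow> (\<exists>B::'a set. finite B \<and> (\<forall>x. \<exists>c. x = (\<Sum>b\<in>B. of_rat (c b) * b)))"

definition subfield :: "'a::field set \<Rightarrow> bool" where
  "subfield k \<longleftrightarrow> 0 \<in> k \<and> 1 \<in> k \<and> (\<forall>x\<in>k. \<forall>y\<in>k. x + y \<in> k \<and> x * y \<in> k \<and> - x \<in> k)
     \<and> (\<forall>x\<in>k. x \<noteq> 0 \<longrightarrow> inverse x \<in> k)"

definition alg_closed_subfield :: "'a::field set \<Rightarrow> bool" where
  "alg_closed_subfield k \<longleftrightarrow> subfield k \<and>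
     (\<forall>p. (\<forall>i. coeff p i \<in> k) \<and> degree p \<ge> 1 \<longrightarrow> (\<exists>z\<in>k. poly p z = 0))"

definition rat_fun_field :: "'a::field set \<Rightarrow> 'a \<Rightarrow> 'a set" where
  "rat_fun_field k t = {poly p t / poly q t | p q. (\<forall>i. coeff p i \<in> k) \<and> (\<forall>i. coeff q i \<in> k)
                                                 \<and> poly q t \<noteq> 0}"

text \<open>K (the whole type) is a finite extension of k(t), with k algebraically closed (of
  characteristic 0, since K has characteristic 0) and t transcendental over k.\<close>
definition function_field_over :: "'a::field_char_0 set \<Rightarrow> bool" where
  "function_field_over k \<longleftrightarrow> alg_closed_subfield k \<and>
     (\<exists>t. (\<forall>p. (\<forall>i. coeff p i \<in> k) \<and> poly p t = 0 \<longrightarrow> p = 0) \<and>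
          (\<exists>B::'a set. finite B \<and> (\<forall>x. \<exists>c. (\<forall>b. c b \<in> rat_fun_field k t) \<and> x = (\<Sum>b\<in>B. c b * b))))"

definition admissible_place :: "('a::field_char_0 \<Rightarrow> real) \<Rightarrow> bool" where
  "admissible_place v \<longleftrightarrow> nonarch_place v \<and>
     (number_field TYPE('a) \<or> (\<exists>k. function_field_over k \<and> (\<forall>a\<in>k. a \<noteq> 0 \<longrightarrow> v a = 1)))"

definition alg_closed_field :: "'b::field itself \<Rightarrow> bool" where
  "alg_closed_field _ \<longleftrightarrow> (\<forall>p::'b poly. degree p \<ge> 1 \<longrightarrow> (\<exists>z. poly p z = 0))"

definition complete_wrt :: "('b::field \<Rightarrow> real) \<Rightarrow> bool" where
  "complete_wrt w \<longleftrightarrow> (\<forall>X::nat \<Rightarrow> 'b. (\<forall>e>0. \<exists>N. \<forall>m\<ge>N. \<forall>n\<ge>N. w (X m - X n) < e) \<longrightarrow>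
       (\<exists>l. \<forall>e>0. \<exists>N. \<forall>n\<ge>N. w (X n - l) < e))"

definition valued_embedding :: "('a::field \<Rightarrow> real) \<Rightarrow> ('b::field \<Rightarrow> real) \<Rightarrow> ('a \<Rightarrow> 'b) \<Rightarrow> bool" where
  "valued_embedding v w \<sigma> \<longleftrightarrow> \<sigma> 1 = 1 \<and> (\<forall>x y. \<sigma> (x + y) = \<sigma> x + \<sigma> y \<and> \<sigma> (x * y) = \<sigma> x * \<sigma> y)
     \<and> (\<forall>x. w (\<sigma> x) = v x)"

definition cdisk :: "('b::field \<Rightarrow> real) \<Rightarrow> 'b \<Rightarrow> real \<Rightarrow> 'b set" where
  "cdisk w a r = {z. w (z - a) \<le> r}"

definition logplus :: "real \<Rightarrow> real" where
  "logplus x = (if x \<le> 1 then 0 else ln x)"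

definition escape_rate :: "('b::field \<Rightarrow> real) \<Rightarrow> nat \<Rightarrow> ('b \<Rightarrow> 'b) \<Rightarrow> 'b \<Rightarrow> real" where
  "escape_rate w d F z = lim (\<lambda>n. logplus (w ((F ^^ n) z)) / real d ^ n)"

definition splitting_radius :: "('b::field \<Rightarrow> real) \<Rightarrow> nat \<Rightarrow> ('b \<Rightarrow> 'b) \<Rightarrow> real" where
  "splitting_radius w d F =
     ln (Inf {\<rho>. \<rho> > 0 \<and> (\<exists>g a. {z. escape_rate w d F z \<le> g} = cdisk w a \<rho>)})"

text \<open>Radius of the disk component containing 0 of \<open>G\<^sup>-\<^sup>1(B(0,R))\<close> (G a polynomial map):
  the supremum of the radii of closed disks about 0 contained in the preimage.
  The classical points of the Berkovich component are exactly the closed disk of this radius.\<close>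
definition comp_radius :: "('b::field \<Rightarrow> real) \<Rightarrow> ('b \<Rightarrow> 'b) \<Rightarrow> real \<Rightarrow> real" where
  "comp_radius w G R = Sup {\<rho>. \<rho> > 0 \<and> cdisk w 0 \<rho> \<subseteq> G -` cdisk w 0 R}"

text \<open>Radius of \<open>\<B>\<^sub>i\<close> (i \<ge> 1): \<open>\<B>\<^sub>1\<close> is the component of \<open>f\<^sup>-\<^sup>1(B(0,e^{g_v}))\<close> containing 0,
  \<open>\<B>\<^sub>i\<close> the component of \<open>f^{-(i-1)}(\<B>\<^sub>1)\<close> containing 0.\<close>
definition B_radius :: "('b::field \<Rightarrow> real) \<Rightarrow> nat \<Rightarrow> ('b \<Rightarrow> 'b) \<Rightarrow> nat \<Rightarrow> real" where
  "B_radius w d F i =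
     (let r1 = comp_radius w F (exp (splitting_radius w d F)) in comp_radius w (F ^^ (i - 1)) r1)"

text \<open>Hsia kernel relative to \<open>\<infinity>\<close> on the diagonal at a disk point: \<open>\<delta>(\<zeta>\<^sub>a\<^sub>,\<^sub>r,\<zeta>\<^sub>a\<^sub>,\<^sub>r) = r\<close>
  (also for the open disk \<open>B(a,r)\<^sup>-\<close>, whose boundary point is \<open>\<zeta>\<^sub>a\<^sub>,\<^sub>r\<close>).\<close>
definition hsia_diag :: "real \<Rightarrow> real" where
  "hsia_diag r = r"

definition annulus_mod :: "real \<Rightarrow> real \<Rightarrow> real" where
  "annulus_mod R R' = ln (hsia_diag R) - ln (hsia_diag R')"

end

theory Submission
  imports Defs Complex_Main
begin


context fixes w :: "'b::field \<Rightarrow> real" assumes na: "nonarch_abs w"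
begin

lemma w0: "w 0 = 0" using na by (simp add: nonarch_abs_def)
lemma wpos: "x \<noteq> 0 \<Longrightarrow> w x > 0" using na by (simp add: nonarch_abs_def)
lemma wmult: "w (x * y) = w x * w y" using na by (simp add: nonarch_abs_def)
lemma wadd: "w (x + y) \<le> max (w x) (w y)" using na by (simp add: nonarch_abs_def)
lemma wnn: "w x \<ge> 0" using w0 wpos by (cases "x = 0") (auto simp: less_imp_le)
lemma weq0: "w x = 0 \<longleftrightarrow> x = 0" using w0 wpos by (metis less_irrefl)
lemma w1: "w 1 = 1"
proof -
  have "w 1 = w 1 * w 1" using wmult[of 1 1] by simp
  moreover have "w 1 > 0" using wpos by simp
  ultimately show ?thesis by (metis mult_cancel_left1 less_irrefl)
qed
lemma wm1: "w (-1) = 1"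
proof -
  have "w (-1) * w (-1) = 1" using wmult[of "-1" "-1"] w1 by simp
  moreover have "w (-1) \<ge> 0" by (rule wnn)
  ultimately show ?thesis by (metis abs_of_nonneg power2_eq_square real_sqrt_abs real_sqrt_one abs_one)
qed
lemma wneg: "w (- x) = w x" using wmult[of "-1" x] wm1 by simp
lemma wsub: "w (x - y) \<le> max (w x) (w y)" using wadd[of x "-y"] wneg[of y] by simp
lemma wsub_comm: "w (x - y) = w (y - x)" using wneg[of "x - y"] by simp
lemma wadd_eq: assumes "w x \<noteq> w y" shows "w (x + y) = max (w x) (w y)"
proof -
  have a: "w (x + y) \<ge> w x" if "w y < w x" for x y
  proof -
    have "w x = w ((x + y) + (- y))" by simp
    also have "\<dots> \<le> max (w (x + y)) (w y)" using wadd wneg by metis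
    finally show ?thesis using that by linarith
  qed
  have "w y < w x \<or> w x < w y" using assms by linarith
  then show ?thesis using wadd[of x y] a[of y x] a[of x y] by (auto simp: add.commute max_def)
qed
lemma wsub_eq: assumes "w x \<noteq> w y" shows "w (x - y) = max (w x) (w y)"
  using wadd_eq[of x "-y"] assms wneg[of y] by simp
lemma wpow: "w (x ^ n) = w x ^ n" by (induction n) (auto simp: w1 wmult)
lemma wprod: "w (prod_list xs) = prod_list (map w xs)" by (induction xs) (auto simp: w1 wmult)
lemma winv: "w (inverse x) = inverse (w x)"
proof (cases "x = 0")
  case True then show ?thesis by (simp add: w0)
next
  case False
  have "w (inverse x) * w x = 1" using wmult[of "inverse x" x] False w1 by simp
  then show ?thesis by (simp add: field_simps) (metis divide_inverse mult.commute mult_1 nonzero_eq_divide_eq zero_neq_one mult_zero_right)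
qed
lemma wsum: assumes "finite A" "B \<ge> 0" "\<And>i. i \<in> A \<Longrightarrow> w (f i) \<le> B" shows "w (sum f A) \<le> B"
  using assms
proof (induction A rule: finite_induct)
  case empty then show ?case by (simp add: w0)
next
  case (insert x F)
  then have "w (f x) \<le> B" "w (sum f F) \<le> B" by auto
  then show ?case using wadd[of "f x" "sum f F"] insert(1,2) by simp
qed
end


lemma pl_nonneg: "(\<And>x. x \<in> set xs \<Longrightarrow> (0::real) \<le> f x) \<Longrightarrow> 0 \<le> prod_list (map f xs)"
  by (induction xs) auto
lemma pl_pos: "(\<And>x. x \<in> set xs \<Longrightarrow> (0::real) < f x) \<Longrightarrow> 0 < prod_list (map f xs)"
  by (induction xs) auto
lemma pl_mono: "(\<And>x. x \<in> set xs \<Longrightarrow> (0::real) \<le> f x \<and> f x \<le> g x) \<Longrightarrow> prod_list (map f xs) \<le> prod_list (map g xs)"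
proof (induction xs)
  case (Cons a xs)
  then have "0 \<le> f a" "f a \<le> g a" "prod_list (map f xs) \<le> prod_list (map g xs)" by auto
  moreover have "0 \<le> prod_list (map f xs)" using Cons.prems by (intro pl_nonneg) auto
  ultimately show ?case by (simp add: mult_mono)
qed simp
lemma pl_mono_q: "(\<And>x. x \<in> set xs \<Longrightarrow> (0::real) \<le> g x \<and> g x \<le> q * f x) \<Longrightarrow> q \<ge> 0 \<Longrightarrow>
   prod_list (map g xs) \<le> q ^ length xs * prod_list (map f xs)"
proof (induction xs)
  case (Cons a xs)
  then have h: "prod_list (map g xs) \<le> q ^ length xs * prod_list (map f xs)" "0 \<le> g a" "g a \<le> q * f a" by auto
  have "g a * prod_list (map g xs) \<le> (q * f a) * (q ^ length xs * prod_list (map f xs))"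
    by (rule mult_mono) (use h Cons.prems in \<open>auto intro: pl_nonneg order_trans[OF h(2) h(3)]\<close>)
  then show ?case by (simp add: algebra_simps)
qed simp
lemma pl_const: "(\<And>x. x \<in> set xs \<Longrightarrow> f x = (c::real)) \<Longrightarrow> prod_list (map f xs) = c ^ length xs"
  by (induction xs) auto
lemma pl_remove1: "x \<in> set xs \<Longrightarrow> prod_list (map f xs) = (f x::real) * prod_list (map f (remove1 x xs))"
  by (induction xs) auto
lemma pl_cont: "isCont (\<lambda>r::real. prod_list (map (\<lambda>c. max r (g c)) xs)) x"
  by (induction xs) (auto intro!: continuous_intros)

locale setting =
  fixes w :: "'b::field \<Rightarrow> real" and d :: nat and cs :: "'b list" and F :: "'b \<Rightarrow> 'b"
  assumes na: "nonarch_abs w"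
  and dens: "\<And>\<rho> s. 0 < \<rho> \<Longrightarrow> s < \<rho> \<Longrightarrow> \<exists>x. s < w x \<and> w x < \<rho>"
  and unit: "\<And>n. 1 \<le> n \<Longrightarrow> n \<le> d \<Longrightarrow> w (of_nat n) = 1"
  and d3: "d \<ge> 3" and len: "length cs = d - 2"
  and Fdef: "\<And>z. F z = z * z * prod_list (map (\<lambda>c. z - c) cs)"
  and split: "\<And>y. \<exists>es. \<forall>z. F z - y = prod_list (map (\<lambda>e. z - e) es)"
  and big: "\<exists>c\<in>set cs. w c > 1"
begin

lemmas W0 = w0[OF na] and Wpos = wpos[OF na] and Wmult = wmult[OF na] and Wnn = wnn[OF na]
  and Weq0 = weq0[OF na] and W1 = w1[OF na] and Wneg = wneg[OF na] and Wsub = wsub[OF na]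
  and Wsub_eq = wsub_eq[OF na] and Wadd = wadd[OF na] and Wadd_eq = wadd_eq[OF na]
  and Wprod = wprod[OF na] and Wpow = wpow[OF na] and Wsub_comm = wsub_comm[OF na]

definition M where "M = Max (w ` set cs)"
definition phi where "phi r = r * r * prod_list (map (\<lambda>c. max r (w c)) cs)"

lemma cs_ne: "cs \<noteq> []" using len d3 by auto
lemma M_ge: "c \<in> set cs \<Longrightarrow> w c \<le> M" unfolding M_def by simp
lemma M_in: "\<exists>c\<in>set cs. w c = M"
  unfolding M_def using cs_ne by (metis (mono_tags, lifting) List.finite_set Max_in finite_imageI image_iff image_is_empty set_empty)
lemma M_gt1: "M > 1" using big M_ge by fastforce

lemma phi_nonneg: assumes "r \<ge> 0" shows "phi r \<ge> 0"
proof -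
  have "0 \<le> prod_list (map (\<lambda>c. max r (w c)) cs)" using assms by (intro pl_nonneg) auto
  then show ?thesis unfolding phi_def using assms by simp
qed
lemma phi_pos: assumes "r > 0" shows "phi r > 0"
proof -
  have "0 < prod_list (map (\<lambda>c. max r (w c)) cs)" using assms by (intro pl_pos) auto
  then show ?thesis unfolding phi_def using assms by simp
qed
lemma phi_mono: assumes "0 \<le> a" "a \<le> b" shows "phi a \<le> phi b"
proof -
  have "prod_list (map (\<lambda>c. max a (w c)) cs) \<le> prod_list (map (\<lambda>c. max b (w c)) cs)"
    using assms by (intro pl_mono) auto
  moreover have "a * a \<le> b * b" using assms by (simp add: mult_mono)
  ultimately show ?thesis unfolding phi_def using assms
    by (intro mult_mono) (auto intro!: pl_nonneg)
qed
lemma phi_strict: assumes "0 < a" "a < b" shows "phi a < phi b"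
proof -
  have "prod_list (map (\<lambda>c. max a (w c)) cs) \<le> prod_list (map (\<lambda>c. max b (w c)) cs)"
    using assms by (intro pl_mono) auto
  moreover have "a * a < b * b" using assms by (simp add: mult_strict_mono)
  moreover have "0 < prod_list (map (\<lambda>c. max a (w c)) cs)" using assms by (intro pl_pos) auto
  ultimately show ?thesis unfolding phi_def using assms
    by (intro mult_less_le_imp_less) auto
qed
lemma phi_cont: "isCont phi x"
  unfolding phi_def[abs_def] by (intro continuous_intros pl_cont)
lemma phi_inj: "0 < a \<Longrightarrow> 0 < b \<Longrightarrow> phi a = phi b \<Longrightarrow> a = b"
  using phi_strict by (metis less_irrefl linorder_neqE_linordered_idom)
lemma phi_le_iff: "0 < a \<Longrightarrow> 0 < b \<Longrightarrow> phi a \<le> phi b \<longleftrightarrow> a \<le> b"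
  using phi_strict phi_mono by (metis less_le not_le)

lemma Fbound: "w (F z) \<le> phi (w z)"
proof -
  have "w (F z) = w z * w z * prod_list (map (\<lambda>c. w (z - c)) cs)"
    by (simp add: Fdef Wmult Wprod comp_def)
  also have "\<dots> \<le> phi (w z)" unfolding phi_def
    by (intro mult_left_mono pl_mono) (auto simp: Wnn Wsub)
  finally show ?thesis .
qed
lemma F0: "F 0 = 0" by (simp add: Fdef)
lemma Fexact: assumes "w z > M" shows "w (F z) = w z ^ d"
proof -
  have "w (F z) = w z * w z * prod_list (map (\<lambda>c. w (z - c)) cs)"
    by (simp add: Fdef Wmult Wprod comp_def)
  also have "prod_list (map (\<lambda>c. w (z - c)) cs) = w z ^ (d - 2)"
  proof -
    have "w (z - c) = w z" if "c \<in> set cs" for c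
      using Wsub_eq[of z c] M_ge[OF that] assms by auto
    then show ?thesis using pl_const len by metis
  qed
  moreover obtain k where k: "d = Suc (Suc k)" using d3 by (intro that[of "d-2"]) arith
  ultimately show ?thesis by (simp add: k)
qed
lemma phiM: "phi M = M ^ d"
proof -
  have "\<And>c. c\<in>set cs \<Longrightarrow> max M (w c) = M" using M_ge by (simp add: max_absorb1)
  from pl_const[of cs, OF this] len have "prod_list (map (\<lambda>c. max M (w c)) cs) = M ^ (d-2)" by simp
  moreover obtain k where k: "d = Suc (Suc k)" using d3 by (intro that[of "d-2"]) arith
  ultimately show ?thesis unfolding phi_def by (simp add: k)
qed


lemma wu: "1 \<le> u \<Longrightarrow> u \<le> d \<Longrightarrow> w (of_nat u * t) = w t"
  by (simp add: Wmult unit)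

lemma wdiff_nat: assumes "a \<in> {1..d}" "b \<in> {1..d}" "a \<noteq> b" shows "w (of_nat a - of_nat b :: 'b) = 1"
proof (cases "a > b")
  case True
  then have e: "(of_nat a - of_nat b :: 'b) = of_nat (a - b)" by (simp add: of_nat_diff)
  show ?thesis unfolding e using True assms unit[of "a - b"] by simp
next
  case False
  then have "b > a" using assms by simp
  then have e: "(of_nat a - of_nat b :: 'b) = - of_nat (b - a)" by (simp add: of_nat_diff)
  show ?thesis unfolding e Wneg using \<open>b > a\<close> assms unit[of "b - a"] by simp
qed

lemma generic: assumes "t \<noteq> 0" shows "\<exists>u\<in>{1..d}. \<forall>c\<in>set cs. w (of_nat u * t - c) = max (w t) (w c)"
proof -
  define Bad where "Bad c = {u\<in>{1..d}. w (of_nat u * t - c) \<noteq> max (w t) (w c)}" for c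
  have card1: "card (Bad c) \<le> 1" for c
  proof -
    have "a = b" if ab: "a \<in> Bad c" "b \<in> Bad c" for a b
    proof (rule ccontr)
      assume "a \<noteq> b"
      have ad: "a \<in> {1..d}" "b \<in> {1..d}" using ab unfolding Bad_def by auto
      have lt: "w (of_nat u * t - c) < w t \<and> w c = w t" if "u \<in> Bad c" for u
      proof -
        have u: "u \<in> {1..d}" "w (of_nat u * t - c) \<noteq> max (w t) (w c)" using that unfolding Bad_def by auto
        have e: "w (of_nat u * t) = w t" using u wu by auto
        have "w c = w t"
        proof (rule ccontr)
          assume "w c \<noteq> w t"
          then show False using Wsub_eq[of "of_nat u * t" c] e u by simp
        qed
        moreover have "w (of_nat u * t - c) \<le> max (w t) (w c)" using Wsub[of "of_nat u * t" c] e by simp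
        ultimately show ?thesis using u by auto
      qed
      have "(of_nat a * t - c) - (of_nat b * t - c) = (of_nat a - of_nat b) * t" by (simp add: algebra_simps)
      moreover have m: "max (w (of_nat a * t - c)) (w (of_nat b * t - c)) < w t"
        using lt[OF ab(1)] lt[OF ab(2)] by simp
      ultimately have "w ((of_nat a - of_nat b) * t) < w t"
        using Wsub[of "of_nat a * t - c" "of_nat b * t - c"] by (metis le_less_trans)
      then show False using wdiff_nat[OF ad \<open>a \<noteq> b\<close>] by (simp add: Wmult)
    qed
    moreover have "finite (Bad c)" unfolding Bad_def by simp
    ultimately show ?thesis using card_le_Suc0_iff_eq[of "Bad c"] by auto
  qed
  have "card (\<Union>c\<in>set cs. Bad c) \<le> (\<Sum>c\<in>set cs. card (Bad c))" by (rule card_UN_le) simp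
  also have "\<dots> \<le> card (set cs) * 1" using sum_bounded_above[of "set cs" "\<lambda>c. card (Bad c)" 1] card1 by auto
  also have "\<dots> \<le> length cs" using card_length by simp
  also have "\<dots> < card {1..d}" using len d3 by simp
  finally have lt: "card (\<Union>c\<in>set cs. Bad c) < card {1..d}" .
  have "\<not> {1..d} \<subseteq> (\<Union>c\<in>set cs. Bad c)"
  proof
    assume sub: "{1..d} \<subseteq> (\<Union>c\<in>set cs. Bad c)"
    have "finite (\<Union>c\<in>set cs. Bad c)" unfolding Bad_def by auto
    from card_mono[OF this sub] lt show False by simp
  qed
  then obtain u where "u \<in> {1..d}" "\<forall>c\<in>set cs. u \<notin> Bad c" by blast
  then show ?thesis unfolding Bad_def by auto
qed

lemma genF: assumes "t \<noteq> 0" shows "\<exists>z. w z = w t \<and> w (F z) = phi (w t)"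
proof -
  obtain u where u: "u \<in> {1..d}" "\<forall>c\<in>set cs. w (of_nat u * t - c) = max (w t) (w c)"
    using generic[OF assms] by blast
  define z where "z = of_nat u * t"
  have wz: "w z = w t" unfolding z_def using u wu by auto
  have "w (F z) = w z * w z * prod_list (map (\<lambda>c. w (z - c)) cs)"
    by (simp add: Fdef Wmult Wprod comp_def)
  also have "map (\<lambda>c. w (z - c)) cs = map (\<lambda>c. max (w t) (w c)) cs"
    using u(2) unfolding z_def by (intro map_cong) auto
  finally show ?thesis using wz unfolding phi_def by auto
qed

lemma left_cont: assumes "0 < \<rho>" "s < phi \<rho>" shows "\<exists>\<rho>3. 0 < \<rho>3 \<and> \<rho>3 < \<rho> \<and> s < phi \<rho>3"
proof -
  have "phi \<midarrow>\<rho>\<rightarrow> phi \<rho>" using phi_cont isCont_def by blast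
  then obtain e where e: "e > 0" "\<And>x. x \<noteq> \<rho> \<Longrightarrow> norm (x - \<rho>) < e \<Longrightarrow> norm (phi x - phi \<rho>) < phi \<rho> - s"
    unfolding LIM_eq using assms by (metis diff_gt_0_iff_gt)
  define r where "r = max (\<rho>/2) (\<rho> - e/2)"
  have "0 < r" "r < \<rho>" "norm (r - \<rho>) < e" using assms e unfolding r_def by auto
  then show ?thesis using e(2)[of r] by (intro exI[of _ r]) auto
qed

lemma Gen: assumes "0 < \<rho>" "s < phi \<rho>" shows "\<exists>z. w z < \<rho> \<and> w (F z) > s"
proof -
  obtain r where r: "0 < r" "r < \<rho>" "s < phi r" using left_cont[OF assms] by blast
  obtain x where x: "r < w x" "w x < \<rho>" using dens[OF assms(1) r(2)] by blast
  then have "x \<noteq> 0" using r W0 by auto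
  then obtain z where "w z = w x" "w (F z) = phi (w x)" using genF by blast
  moreover have "phi r \<le> phi (w x)" using phi_mono r x by simp
  ultimately show ?thesis using x r by (intro exI[of _ z]) auto
qed

lemma Surj: assumes "0 < \<rho>" "w y < phi \<rho>" shows "\<exists>z. w z < \<rho> \<and> F z = y"
proof -
  obtain r where r: "0 < r" "r < \<rho>" "w y < phi r" using left_cont[OF assms] by blast
  obtain es where es: "\<And>z. F z - y = prod_list (map (\<lambda>e. z - e) es)" using split by blast
  have "\<exists>e\<in>set es. w e \<le> r"
  proof (rule ccontr)
    assume "\<not> ?thesis"
    then have big: "\<And>e. e \<in> set es \<Longrightarrow> w e > r" by auto
    obtain z where z: "w z < r" "w (F z) > w y" using Gen[OF r(1) r(3)] by blast
    have "w (F z - y) = w (F z)" using Wsub_eq[of "F z" y] z by simp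
    moreover have "w (F z - y) = prod_list (map w es)"
    proof -
      have "w (F z - y) = prod_list (map (\<lambda>e. w (z - e)) es)" by (simp add: es Wprod comp_def)
      also have "map (\<lambda>e. w (z - e)) es = map w es"
      proof (intro map_cong refl)
        fix e assume "e \<in> set es"
        then have "w z < w e" using big z(1) by force
        then show "w (z - e) = w e" using Wsub_eq[of z e] by simp
      qed
      finally show ?thesis .
    qed
    moreover have "w y = prod_list (map w es)"
    proof -
      have "w (F 0 - y) = prod_list (map (\<lambda>e. w (0 - e)) es)" by (simp add: es Wprod comp_def)
      then show ?thesis by (simp add: F0 Wneg)
    qed
    ultimately show False using z by simp
  qed
  then obtain e where e: "e \<in> set es" "w e \<le> r" by blast
  have "F e - y = 0" using e(1) by (simp add: es prod_list_zero_iff)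
  then show ?thesis using e r by (intro exI[of _ e]) auto
qed

lemma phi_iter_pos: "0 < r \<Longrightarrow> 0 < (phi ^^ i) r"
  by (induction i) (auto simp: phi_pos)
lemma phi_iter_nonneg: "0 \<le> r \<Longrightarrow> 0 \<le> (phi ^^ i) r"
  by (induction i) (auto simp: phi_nonneg)
lemma phi_iter_mono: "0 \<le> a \<Longrightarrow> a \<le> b \<Longrightarrow> (phi ^^ i) a \<le> (phi ^^ i) b"
  by (induction i) (auto simp: phi_mono phi_iter_nonneg)
lemma phi_iter_strict: "0 < a \<Longrightarrow> a < b \<Longrightarrow> (phi ^^ i) a < (phi ^^ i) b"
  by (induction i) (auto simp: phi_strict phi_iter_pos)
lemma phi_iter_le_iff: "0 < a \<Longrightarrow> 0 < b \<Longrightarrow> (phi ^^ i) a \<le> (phi ^^ i) b \<longleftrightarrow> a \<le> b"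
  using phi_iter_strict phi_iter_mono by (metis less_le not_le)

lemma Fiter_bound: "w ((F ^^ i) z) \<le> (phi ^^ i) (w z)"
proof (induction i)
  case (Suc i)
  have "w ((F ^^ Suc i) z) \<le> phi (w ((F ^^ i) z))" using Fbound by simp
  also have "\<dots> \<le> phi ((phi ^^ i) (w z))" using Suc phi_mono Wnn by blast
  finally show ?case by simp
qed simp

lemma Pi: "0 < \<rho> \<Longrightarrow> s < (phi ^^ i) \<rho> \<Longrightarrow> \<exists>z. w z < \<rho> \<and> w ((F ^^ i) z) > s"
proof (induction i arbitrary: \<rho> s)
  case 0
  show ?case
  proof (cases "s < 0")
    case True then show ?thesis using 0 W0 by (intro exI[of _ 0]) auto
  next
    case False
    then obtain x where "s < w x" "w x < \<rho>" using dens[of \<rho> s] 0 by auto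
    then show ?thesis by auto
  qed
next
  case (Suc i)
  have "s < (phi ^^ i) (phi \<rho>)" using Suc.prems by (simp add: funpow_Suc_right del: funpow.simps)
  then obtain y where y: "w y < phi \<rho>" "w ((F ^^ i) y) > s" using Suc.IH[of "phi \<rho>" s] phi_pos Suc.prems by blast
  obtain z where "w z < \<rho>" "F z = y" using Surj[OF Suc.prems(1) y(1)] by blast
  then show ?case using y by (intro exI[of _ z]) (simp add: funpow_Suc_right del: funpow.simps)
qed

lemma good: assumes "0 < \<rho>" shows "cdisk w 0 \<rho> \<subseteq> (F ^^ i) -` cdisk w 0 R \<longleftrightarrow> (phi ^^ i) \<rho> \<le> R"
proof
  assume h: "cdisk w 0 \<rho> \<subseteq> (F ^^ i) -` cdisk w 0 R"
  show "(phi ^^ i) \<rho> \<le> R"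
  proof (rule ccontr)
    assume "\<not> ?thesis"
    then obtain z where "w z < \<rho>" "w ((F ^^ i) z) > R" using Pi[OF assms] by (meson not_le)
    then have "z \<in> cdisk w 0 \<rho>" unfolding cdisk_def by simp
    then have "(F ^^ i) z \<in> cdisk w 0 R" using h by blast
    then show False using \<open>w ((F ^^ i) z) > R\<close> unfolding cdisk_def by simp
  qed
next
  assume h: "(phi ^^ i) \<rho> \<le> R"
  show "cdisk w 0 \<rho> \<subseteq> (F ^^ i) -` cdisk w 0 R"
  proof
    fix z assume "z \<in> cdisk w 0 \<rho>"
    then have "w z \<le> \<rho>" unfolding cdisk_def by simp
    then have "w ((F ^^ i) z) \<le> (phi ^^ i) \<rho>" using Fiter_bound phi_iter_mono Wnn order_trans by metis
    then show "z \<in> (F ^^ i) -` cdisk w 0 R" using h unfolding cdisk_def by simp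
  qed
qed

lemma comp: assumes "0 < r" "(phi ^^ i) r = R" shows "comp_radius w (F ^^ i) R = r"
proof -
  have e: "\<rho> > 0 \<Longrightarrow> (cdisk w 0 \<rho> \<subseteq> (F ^^ i) -` cdisk w 0 R) \<longleftrightarrow> \<rho> \<le> r" for \<rho>
    using good[of \<rho> i R] phi_iter_le_iff[of \<rho> r i] assms by simp
  have "{\<rho>. \<rho> > 0 \<and> cdisk w 0 \<rho> \<subseteq> (F ^^ i) -` cdisk w 0 R} = {0<..r}"
  proof (intro set_eqI iffI)
    fix x assume "x \<in> {\<rho>. \<rho> > 0 \<and> cdisk w 0 \<rho> \<subseteq> (F ^^ i) -` cdisk w 0 R}"
    then show "x \<in> {0<..r}" using e[of x] by auto
  next
    fix x assume "x \<in> {0<..r}"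
    then show "x \<in> {\<rho>. \<rho> > 0 \<and> cdisk w 0 \<rho> \<subseteq> (F ^^ i) -` cdisk w 0 R}" using e[of x] by auto
  qed
  then show ?thesis unfolding comp_radius_def using assms by simp
qed

lemma phi_surj: assumes "0 < R" shows "\<exists>r>0. phi r = R"
proof -
  define C where "C = prod_list (map (\<lambda>c. max 1 (w c)) cs)"
  have C1: "C \<ge> 1"
  proof -
    have "prod_list (map (\<lambda>c. 1) cs) \<le> C" unfolding C_def by (intro pl_mono) auto
    then show ?thesis by (simp add: pl_const[of cs "\<lambda>c. 1" 1])
  qed
  define b where "b = max 1 R"
  have "phi b \<ge> R"
  proof -
    have "prod_list (map (\<lambda>c. 1) cs) \<le> prod_list (map (\<lambda>c. max b (w c)) cs)" by (intro pl_mono) (auto simp: b_def)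
    then have "1 \<le> prod_list (map (\<lambda>c. max b (w c)) cs)" by (simp add: pl_const[of cs "\<lambda>c. 1" 1])
    moreover have "1 \<le> b" "R \<le> b" unfolding b_def by auto
    moreover have "b \<le> b * b" using mult_right_mono[of 1 b b] \<open>1 \<le> b\<close> by simp
    moreover have "0 \<le> b * b" by simp
    ultimately have "b * b * 1 \<le> phi b" unfolding phi_def by (intro mult_left_mono) auto
    then show ?thesis using \<open>b \<le> b * b\<close> \<open>R \<le> b\<close> by simp
  qed
  define a where "a = min 1 (R / (C + 1))"
  have a: "0 < a" "a \<le> 1" using assms C1 unfolding a_def by auto
  have "phi a \<le> R"
  proof -
    have "prod_list (map (\<lambda>c. max a (w c)) cs) \<le> C" unfolding C_def using a by (intro pl_mono) auto
    then have "phi a \<le> a * a * C" unfolding phi_def using a by (simp add: mult_left_mono)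
    also have "\<dots> \<le> a * C" using a C1 by (simp add: mult_le_cancel_right1 mult_right_le_one_le)
    also have "\<dots> \<le> R / (C + 1) * C" using a C1 unfolding a_def by (intro mult_right_mono) auto
    also have "\<dots> \<le> R" using C1 assms by (simp add: field_simps)
    finally show ?thesis .
  qed
  moreover have "a \<le> b" using a unfolding b_def by auto
  moreover have "continuous_on {a..b} phi" using phi_cont by (simp add: continuous_at_imp_continuous_on)
  ultimately obtain x where "a \<le> x" "phi x = R" using IVT'[of phi a R b] \<open>phi b \<ge> R\<close> by blast
  then show ?thesis using a by (intro exI[of _ x]) auto
qed


lemma iter_big: assumes "w x > M" shows "w ((F ^^ k) x) = w x ^ (d ^ k)"
proof (induction k)
  case (Suc k)
  have "w x \<le> w x ^ (d ^ k)" using power_increasing[of 1 "d ^ k" "w x"] assms M_gt1 d3 by simp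
  then have "w ((F ^^ k) x) > M" using Suc assms by simp
  then have "w ((F ^^ Suc k) x) = w ((F ^^ k) x) ^ d" using Fexact by simp
  then show ?case using Suc by (simp add: power_mult[symmetric] mult.commute)
qed simp

lemma logplus_pow: assumes "T > 1" shows "logplus (T ^ n) = real n * ln T"
proof (cases "n = 0")
  case False
  then have "T ^ n > 1" using assms by simp
  then show ?thesis using assms by (simp add: logplus_def ln_realpow)
qed (simp add: logplus_def)

lemma E_big: assumes "w z > M" shows "escape_rate w d F z = ln (w z)"
proof -
  have "(\<lambda>n. logplus (w ((F ^^ n) z)) / real d ^ n) = (\<lambda>n. ln (w z))"
  proof
    fix n
    have "logplus (w ((F ^^ n) z)) = real (d ^ n) * ln (w z)"
      using iter_big[OF assms] logplus_pow[of "w z"] assms M_gt1 by simp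
    then show "logplus (w ((F ^^ n) z)) / real d ^ n = ln (w z)" using d3 by simp
  qed
  then show ?thesis unfolding escape_rate_def by (simp add: limI)
qed

lemma logplus_nonneg: "logplus x \<ge> 0" unfolding logplus_def by simp

lemma E_small: assumes "w z \<le> M" shows "0 \<le> escape_rate w d F z \<and> escape_rate w d F z \<le> ln M"
proof (cases "\<forall>n. w ((F ^^ n) z) \<le> M")
  case True
  define X where "X n = logplus (w ((F ^^ n) z)) / real d ^ n" for n
  have "X \<longlonglongrightarrow> 0"
  proof (rule real_tendsto_sandwich[of "\<lambda>n. 0" X _ "\<lambda>n. ln M / real d ^ n"])
    show "\<forall>\<^sub>F n in sequentially. 0 \<le> X n" unfolding X_def by (simp add: logplus_nonneg)
    have "logplus (w ((F ^^ n) z)) \<le> ln M" for n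
      using True[rule_format, of n] M_gt1 Wnn unfolding logplus_def by auto
    then show "\<forall>\<^sub>F n in sequentially. X n \<le> ln M / real d ^ n" unfolding X_def
      by (intro always_eventually allI divide_right_mono) auto
    show "(\<lambda>n. ln M / real d ^ n) \<longlonglongrightarrow> 0" using d3 by (intro LIMSEQ_divide_realpow_zero) simp
  qed simp
  then have "escape_rate w d F z = 0" unfolding escape_rate_def X_def[abs_def] by (rule limI)
  then show ?thesis using M_gt1 by simp
next
  case False
  then have ex: "\<exists>n. M < w ((F ^^ n) z)" by (auto simp: not_le)
  define n0 where "n0 = (LEAST n. M < w ((F ^^ n) z))"
  have n0: "M < w ((F ^^ n0) z)" unfolding n0_def by (rule LeastI_ex[OF ex])
  have "n0 \<noteq> 0" using n0 assms by (cases n0) auto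
  then obtain m where m: "n0 = Suc m" by (cases n0) auto
  have "\<not> M < w ((F ^^ m) z)" using not_less_Least[of m "\<lambda>n. M < w ((F ^^ n) z)"] m unfolding n0_def by simp
  then have wm: "w ((F ^^ m) z) \<le> M" by simp
  define T where "T = w ((F ^^ n0) z)"
  have T: "M < T" using n0 T_def by simp
  have "T \<le> phi (w ((F ^^ m) z))" unfolding T_def m using Fbound by simp
  also have "\<dots> \<le> phi M" using phi_mono wm Wnn by simp
  finally have TM: "T \<le> M ^ d" using phiM by simp
  have ev: "\<forall>\<^sub>F n in sequentially. logplus (w ((F ^^ n) z)) / real d ^ n = ln T / real d ^ n0"
  proof (rule eventually_sequentiallyI[of n0])
    fix n assume "n0 \<le> n"
    then obtain k where k: "n = k + n0" by (metis add.commute le_Suc_ex)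
    have "(F ^^ n) z = (F ^^ k) ((F ^^ n0) z)" unfolding k funpow_add by simp
    then have "w ((F ^^ n) z) = T ^ (d ^ k)" using iter_big[of "(F ^^ n0) z" k] n0 T_def by simp
    then have "logplus (w ((F ^^ n) z)) = real (d ^ k) * ln T" using logplus_pow[of T] T M_gt1 by simp
    moreover have "real d ^ n = real d ^ k * real d ^ n0" unfolding k by (simp add: power_add)
    ultimately show "logplus (w ((F ^^ n) z)) / real d ^ n = ln T / real d ^ n0" using d3 by simp
  qed
  then have E: "escape_rate w d F z = ln T / real d ^ n0"
    unfolding escape_rate_def by (intro limI tendsto_eventually)
  have lnT: "0 < ln T" using T M_gt1 by simp
  have "ln T \<le> ln (M ^ d)" using TM T M_gt1 by simp
  then have lnT2: "ln T \<le> real d * ln M" using M_gt1 by (simp add: ln_realpow)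
  have "real d \<le> real d ^ n0" using m d3 power_increasing[of 1 n0 "real d"] by simp
  then have "ln T / real d ^ n0 \<le> real d * ln M / real d"
    using lnT lnT2 d3 by (intro frac_le) auto
  then show ?thesis using E lnT d3 by simp
qed

lemma E_nonneg: "0 \<le> escape_rate w d F z"
proof (cases "w z \<le> M")
  case True then show ?thesis using E_small by blast
next
  case False
  then have "w z > 1" using M_gt1 by simp
  then show ?thesis using E_big[of z] False by simp
qed

lemma E_zero: assumes "F x = 0" shows "escape_rate w d F x = 0"
proof -
  have "\<forall>\<^sub>F n in sequentially. logplus (w ((F ^^ n) x)) / real d ^ n = 0"
  proof (rule eventually_sequentiallyI[of 1])
    fix n :: nat assume "1 \<le> n"
    then obtain k where k: "n = Suc k" by (cases n) auto
    have z: "(F ^^ k) 0 = 0" by (induction k) (auto simp: F0)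
    have "(F ^^ n) x = 0" unfolding k funpow_Suc_right using assms z by simp
    then show "logplus (w ((F ^^ n) x)) / real d ^ n = 0" by (simp add: W0 logplus_def)
  qed
  then show ?thesis unfolding escape_rate_def by (intro limI tendsto_eventually)
qed

lemma split_rad: "splitting_radius w d F = ln M"
proof -
  define S where "S = {\<rho>. \<rho> > 0 \<and> (\<exists>g a. {z. escape_rate w d F z \<le> g} = cdisk w a \<rho>)}"
  have "M \<in> S"
  proof -
    have "{z. escape_rate w d F z \<le> ln M} = cdisk w 0 M"
    proof (intro set_eqI iffI)
      fix z assume "z \<in> {z. escape_rate w d F z \<le> ln M}"
      then show "z \<in> cdisk w 0 M" unfolding cdisk_def using E_big[of z] M_gt1 by (cases "w z \<le> M") auto
    next
      fix z assume "z \<in> cdisk w 0 M"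
      then show "z \<in> {z. escape_rate w d F z \<le> ln M}" unfolding cdisk_def using E_small[of z] by auto
    qed
    then show ?thesis unfolding S_def using M_gt1 by auto
  qed
  moreover have "M \<le> \<rho>" if rS: "\<rho> \<in> S" for \<rho>
  proof -
    obtain g a where ga: "{z. escape_rate w d F z \<le> g} = cdisk w a \<rho>" "\<rho> > 0" using rS unfolding S_def by blast
    have "a \<in> cdisk w a \<rho>" unfolding cdisk_def using ga W0 by simp
    then have "escape_rate w d F a \<le> g" using ga by blast
    then have g0: "0 \<le> g" using E_nonneg order_trans by blast
    obtain cK where cK: "cK \<in> set cs" "w cK = M" using M_in by blast
    have "F cK = 0" using cK(1) by (simp add: Fdef prod_list_zero_iff)
    then have "cK \<in> cdisk w a \<rho>" "0 \<in> cdisk w a \<rho>"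
      using ga(1)[symmetric] E_zero[of cK] E_zero[of 0] F0 g0 by auto
    then have "w (cK - a) \<le> \<rho>" "w a \<le> \<rho>" unfolding cdisk_def by (auto simp: Wneg)
    moreover have "w cK \<le> max (w (cK - a)) (w a)" using Wadd[of "cK - a" a] by simp
    ultimately show ?thesis using cK by simp
  qed
  ultimately have "Inf S = M" by (intro cInf_eq_minimum) auto
  then show ?thesis unfolding splitting_radius_def S_def by simp
qed


primrec sq :: "nat \<Rightarrow> real" where
  "sq 0 = M" | "sq (Suc i) = (SOME r. r > 0 \<and> phi r = sq i)"

lemma sq_pos: "sq i > 0"
proof (induction i)
  case 0 then show ?case using M_gt1 by simp
next
  case (Suc i)
  then show ?case using someI_ex[OF phi_surj[OF Suc]] by simp
qed
lemma sq_phi: "phi (sq (Suc i)) = sq i"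
  using someI_ex[OF phi_surj[OF sq_pos[of i]]] by simp

declare sq.simps(2)[simp del]

lemma iter_sq: "(phi ^^ k) (sq (Suc k)) = sq 1"
proof (induction k)
  case (Suc k)
  have "(phi ^^ Suc k) (sq (Suc (Suc k))) = (phi ^^ k) (phi (sq (Suc (Suc k))))"
    by (simp add: funpow_Suc_right del: funpow.simps)
  then show ?case using Suc sq_phi by simp
qed simp

lemma B_sq: assumes "i \<ge> 1" shows "B_radius w d F i = sq i"
proof -
  have r1: "comp_radius w F (exp (splitting_radius w d F)) = sq 1"
  proof -
    have "exp (splitting_radius w d F) = M" using split_rad M_gt1 by simp
    moreover have "(phi ^^ 1) (sq 1) = M" using sq_phi[of 0] by simp
    ultimately show ?thesis using comp[of "sq 1" 1 M] sq_pos by simp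
  qed
  obtain k where k: "i = Suc k" using assms by (cases i) auto
  show ?thesis unfolding B_radius_def Let_def r1 k
    using comp[of "sq (Suc k)" k "sq 1"] sq_pos iter_sq by simp
qed

lemma phi1: "phi 1 \<ge> M"
proof -
  obtain cK where cK: "cK \<in> set cs" "w cK = M" using M_in by blast
  have "prod_list (map (\<lambda>c. max 1 (w c)) cs) = max 1 (w cK) * prod_list (map (\<lambda>c. max 1 (w c)) (remove1 cK cs))"
    using pl_remove1[OF cK(1)] by simp
  moreover have "prod_list (map (\<lambda>c. 1) (remove1 cK cs)) \<le> prod_list (map (\<lambda>c. max 1 (w c)) (remove1 cK cs))"
    by (intro pl_mono) auto
  moreover have "prod_list (map (\<lambda>c. 1::real) (remove1 cK cs)) = 1" by (simp add: pl_const[of _ "\<lambda>c. 1" 1])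
  ultimately show ?thesis unfolding phi_def using cK M_gt1
    by (simp add: mult_le_cancel_left1)
qed

lemma sq1_le: "sq 1 \<le> 1"
  using phi1 sq_phi[of 0] phi_le_iff[of "sq 1" 1] sq_pos by simp

lemma sq1_lower: "M \<le> sq 1 * sq 1 * M ^ (d - 2)"
proof -
  have "prod_list (map (\<lambda>c. max (sq 1) (w c)) cs) \<le> prod_list (map (\<lambda>c. M) cs)"
    using sq1_le M_gt1 M_ge sq_pos[of 1] by (intro pl_mono) auto
  then have "prod_list (map (\<lambda>c. max (sq 1) (w c)) cs) \<le> M ^ (d - 2)"
    using len by (simp add: pl_const[of _ "\<lambda>c. M" M])
  then have "phi (sq 1) \<le> sq 1 * sq 1 * M ^ (d - 2)" unfolding phi_def
    using sq_pos[of 1] by (intro mult_left_mono) auto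
  then show ?thesis using sq_phi[of 0] by simp
qed

lemma sq_dec: "sq (Suc i) \<le> sq i"
proof (induction i)
  case 0 then show ?case using sq1_le M_gt1 by simp
next
  case (Suc i)
  then have "phi (sq (Suc (Suc i))) \<le> phi (sq (Suc i))" using sq_phi by simp
  then show ?case using phi_le_iff sq_pos by blast
qed

lemma sq_le_M: "sq i \<le> M"
  by (induction i) (auto intro: order_trans[OF sq_dec])

lemma maxq: assumes "0 < a" "a \<le> b" shows "max b x \<le> (b / a) * max a (x::real)"
proof -
  have q: "b / a \<ge> 1" using assms by simp
  have ba: "(b / a) * a = b" using assms by simp
  show ?thesis
  proof (cases "x \<le> a")
    case True
    then have "max b x = b" "max a x = a" using assms by auto
    then show ?thesis using ba by simp
  next
    case False
    then have mx: "max a x = x" by simp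
    have "1 * x \<le> (b / a) * x" using q False assms by (intro mult_right_mono) auto
    moreover have "(b / a) * a \<le> (b / a) * x" using False q by (intro mult_left_mono) auto
    ultimately show ?thesis unfolding mx using ba by simp
  qed
qed

lemma ratio: assumes "0 < a" "a \<le> b" "b \<le> M"
  shows "(b / a) ^ 2 * phi a \<le> phi b" "phi b \<le> (b / a) ^ (d - 1) * phi a"
proof -
  define P where "P x = prod_list (map (\<lambda>c. max x (w c)) cs)" for x
  have Pm: "P a \<le> P b" unfolding P_def using assms by (intro pl_mono) auto
  have phix: "phi x = x * x * P x" for x unfolding phi_def P_def by simp
  have e2: "(b / a) ^ 2 * (a * a) = b * b" using assms by (simp add: power2_eq_square field_simps)
  have "(b / a) ^ 2 * (a * a * P a) = ((b / a) ^ 2 * (a * a)) * P a" by (simp only: mult.assoc)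
  also have "\<dots> = b * b * P a" using e2 by simp
  also have "\<dots> \<le> b * b * P b" using Pm by (intro mult_left_mono) auto
  finally show "(b / a) ^ 2 * phi a \<le> phi b" unfolding phix .
  obtain cK where cK: "cK \<in> set cs" "w cK = M" using M_in by blast
  define R where "R x = prod_list (map (\<lambda>c. max x (w c)) (remove1 cK cs))" for x
  have PR: "P x = max x M * R x" for x unfolding P_def R_def using pl_remove1[OF cK(1)] cK by simp
  have Rle: "R b \<le> (b / a) ^ length (remove1 cK cs) * R a" unfolding R_def
  proof (rule pl_mono_q)
    fix x assume "x \<in> set (remove1 cK cs)"
    show "0 \<le> max b (w x) \<and> max b (w x) \<le> (b / a) * max a (w x)"
      using maxq[OF assms(1,2), of "w x"] assms(1,2) max.cobounded1[of b "w x"] by linarith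
  next
    show "0 \<le> b / a" using assms by simp
  qed
  have lr: "length (remove1 cK cs) = d - 3" using cK len by (simp add: length_remove1)
  have Ra: "R a \<ge> 0" unfolding R_def using assms by (intro pl_nonneg) auto
  have "phi b = b * b * M * R b" unfolding phix PR using assms by simp
  also have "\<dots> \<le> b * b * M * ((b / a) ^ (d - 3) * R a)"
    using Rle lr assms M_gt1 by (intro mult_left_mono) auto
  also have "\<dots> = (b / a) ^ 2 * (b / a) ^ (d - 3) * (a * a * M * R a)" using e2 by (simp add: algebra_simps)
  also have "(b / a) ^ 2 * (b / a) ^ (d - 3) = (b / a) ^ (d - 1)"
  proof -
    have "2 + (d - 3) = d - 1" using d3 by arith
    then show ?thesis by (metis power_add)
  qed
  also have "a * a * M * R a = phi a" unfolding phix PR using assms by simp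
  finally show "phi b \<le> (b / a) ^ (d - 1) * phi a" .
qed


definition m where "m i = ln (sq i) - ln (sq (Suc i))"

lemma m_rec: "2 * m (Suc i) \<le> m i \<and> m i \<le> (real d - 1) * m (Suc i)"
proof -
  define a where "a = sq (Suc (Suc i))"
  define b where "b = sq (Suc i)"
  have ab: "0 < a" "a \<le> b" "b \<le> M" "0 < b" unfolding a_def b_def using sq_pos sq_dec sq_le_M by auto
  have pa: "phi a = b" "phi b = sq i" unfolding a_def b_def using sq_phi by auto
  have si: "0 < sq i" using sq_pos by simp
  have lq: "ln (b / a) = ln b - ln a" using ab by (simp add: ln_div)
  have mm: "m i = ln (sq i) - ln b" "m (Suc i) = ln b - ln a" unfolding m_def a_def b_def by auto
  have r1: "(b / a) ^ 2 * b \<le> sq i" using ratio(1)[OF ab(1-3)] pa by simp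
  have "ln ((b / a) ^ 2 * b) \<le> ln (sq i)" using r1 ab si by (subst ln_le_cancel_iff) auto
  then have "2 * ln (b / a) + ln b \<le> ln (sq i)" using ab by (simp add: ln_mult ln_realpow)
  then have A: "2 * m (Suc i) \<le> m i" using mm lq by simp
  have r2: "sq i \<le> (b / a) ^ (d - 1) * b" using ratio(2)[OF ab(1-3)] pa by simp
  have "ln (sq i) \<le> ln ((b / a) ^ (d - 1) * b)" using r2 ab si by (subst ln_le_cancel_iff) auto
  then have "ln (sq i) \<le> real (d - 1) * ln (b / a) + ln b" using ab by (simp add: ln_mult ln_realpow)
  moreover have "real (d - 1) = real d - 1" using d3 by (simp add: of_nat_diff)
  ultimately have B: "m i \<le> (real d - 1) * m (Suc i)" using mm lq by simp
  from A B show ?thesis by simp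
qed

lemma m0: "ln M \<le> m 0 \<and> m 0 \<le> (real d - 1) * ln M / 2"
proof -
  have s1: "0 < sq 1" "sq 1 \<le> 1" using sq_pos sq1_le by auto
  have "ln (sq 1) \<le> 0" using s1 by simp
  then have A: "ln M \<le> m 0" unfolding m_def by simp
  have "ln M \<le> ln (sq 1 * sq 1 * M ^ (d - 2))" using sq1_lower s1 M_gt1 by (subst ln_le_cancel_iff) auto
  then have "ln M \<le> 2 * ln (sq 1) + real (d - 2) * ln M" using s1 M_gt1 by (simp add: ln_mult ln_realpow)
  moreover have "real (d - 2) = real d - 2" using d3 by (simp add: of_nat_diff)
  ultimately have "ln M \<le> 2 * ln (sq 1) + (real d - 2) * ln M" by simp
  then have B: "m 0 \<le> (real d - 1) * ln M / 2" unfolding m_def by (simp add: field_simps)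
  from A B show ?thesis by simp
qed

lemma m_bounds: "ln M / (real d - 1) ^ i \<le> m i \<and> m i \<le> (real d - 1) * ln M / 2 ^ (i + 1)"
proof (induction i)
  case 0 then show ?case using m0 by simp
next
  case (Suc i)
  have d1: "real d - 1 > 0" using d3 by simp
  have r: "2 * m (Suc i) \<le> m i" "m i \<le> (real d - 1) * m (Suc i)" using m_rec by auto
  have "ln M / (real d - 1) ^ Suc i = (ln M / (real d - 1) ^ i) / (real d - 1)" by (simp add: field_simps)
  also have "\<dots> \<le> m i / (real d - 1)" using Suc d1 by (intro divide_right_mono) auto
  also have "\<dots> \<le> m (Suc i)" using r(2) d1 by (simp add: field_simps mult.commute)
  finally have A: "ln M / (real d - 1) ^ Suc i \<le> m (Suc i)" .
  have "m (Suc i) \<le> m i / 2" using r(1) by simp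
  also have "\<dots> \<le> ((real d - 1) * ln M / 2 ^ (i + 1)) / 2" using Suc by (intro divide_right_mono) auto
  also have "\<dots> = (real d - 1) * ln M / 2 ^ (Suc i + 1)" by simp
  finally show ?case using A by simp
qed

lemma final:
  shows "(\<forall>i\<ge>1.
            splitting_radius w d F / (real d - 1) ^ i
              \<le> annulus_mod (B_radius w d F i) (B_radius w d F (i + 1))
          \<and> annulus_mod (B_radius w d F i) (B_radius w d F (i + 1))
              \<le> (real d - 1) * splitting_radius w d F / 2 ^ (i + 1))
       \<and> splitting_radius w d F
           \<le> annulus_mod (exp (splitting_radius w d F)) (B_radius w d F 1)
       \<and> annulus_mod (exp (splitting_radius w d F)) (B_radius w d F 1)
           \<le> (real d - 1) * splitting_radius w d F / 2"
proof -
  have am: "annulus_mod (B_radius w d F i) (B_radius w d F (i + 1)) = m i" if "i \<ge> 1" for i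
    using B_sq[of i] B_sq[of "i+1"] that unfolding annulus_mod_def hsia_diag_def m_def by simp
  have a0: "annulus_mod (exp (ln M)) (B_radius w d F 1) = m 0"
    using B_sq[of 1] split_rad M_gt1 unfolding annulus_mod_def hsia_diag_def m_def by simp
  show ?thesis unfolding split_rad a0 using am m_bounds m0 by simp
qed

end


lemma root_exists: fixes c :: "'b::field"
  assumes ac: "alg_closed_field TYPE('b)" and n: "n > 0" shows "\<exists>y. y ^ n = c"
proof -
  have "degree ([:-c:] + monom 1 n) = n" using n by (subst degree_add_eq_right) (auto simp: degree_monom_eq)
  then obtain y where "poly ([:-c:] + monom 1 n) y = 0" using ac n unfolding alg_closed_field_def
    by (metis One_nat_def Suc_leI)
  then show ?thesis by (intro exI[of _ y]) (simp add: poly_monom)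
qed

lemma density: fixes w :: "'b::field \<Rightarrow> real"
  assumes na: "nonarch_abs w" and ac: "alg_closed_field TYPE('b)" and nt: "\<exists>x. w x \<noteq> 0 \<and> w x \<noteq> 1"
    and r: "0 < \<rho>" "s < \<rho>"
  shows "\<exists>x. s < w x \<and> w x < \<rho>"
proof -
  obtain x0 where x0: "w x0 \<noteq> 0" "w x0 \<noteq> 1" using nt by blast
  have "\<exists>\<pi>. 0 < w \<pi> \<and> w \<pi> < 1"
  proof (cases "w x0 < 1")
    case True then show ?thesis using x0 wnn[OF na, of x0] by (intro exI[of _ x0]) auto
  next
    case False
    then have "w x0 > 1" using x0 by simp
    moreover have "w (inverse x0) = inverse (w x0)" using winv[OF na, of x0] .
    ultimately have "0 < w (inverse x0)" "w (inverse x0) < 1" by (auto simp: inverse_less_1_iff)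
    then show ?thesis by blast
  qed
  then obtain \<pi> where pi: "0 < w \<pi>" "w \<pi> < 1" by blast
  have pi0: "\<pi> \<noteq> 0" using pi w0[OF na] by auto
  define a where "a = w \<pi>"
  define la where "la = ln a"
  have la: "la < 0" unfolding la_def a_def using pi by simp
  define s' where "s' = max s (\<rho> / 2)"
  have s': "0 < s'" "s' < \<rho>" "s \<le> s'" unfolding s'_def using r by auto
  have "ln \<rho> / la < ln s' / la" using s' la by (simp add: divide_strict_right_mono_neg)
  then obtain q where q: "q \<in> \<rat>" "ln \<rho> / la < q" "q < ln s' / la" using Rats_dense_in_real by blast
  obtain m n where mn: "n > 0" "q = of_int m / of_int n" using Rats_cases'[OF q(1)] by metis
  define c where "c = (if m \<ge> 0 then \<pi> ^ nat m else (inverse \<pi>) ^ nat (- m))"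
  have c0: "c \<noteq> 0" unfolding c_def using pi0 by auto
  have lc: "ln (w c) = of_int m * la"
  proof (cases "m \<ge> 0")
    case True
    then have "w c = a ^ nat m" unfolding c_def a_def by (simp add: wpow[OF na])
    then show ?thesis using True pi unfolding la_def a_def by (simp add: ln_realpow)
  next
    case False
    then have "w c = (inverse a) ^ nat (- m)" unfolding c_def a_def by (simp add: wpow[OF na] winv[OF na])
    then show ?thesis using False pi unfolding la_def a_def by (simp add: ln_realpow ln_inverse)
  qed
  obtain y where y: "y ^ nat n = c" using root_exists[OF ac, of "nat n" c] mn by auto
  have y0: "y \<noteq> 0" using y c0 mn by auto
  have wy: "w y > 0" using wpos[OF na y0] .
  have "real (nat n) * ln (w y) = ln (w c)" using y wy by (metis ln_realpow wpow[OF na])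
  then have e: "real_of_int n * ln (w y) = real_of_int n * (q * la)" using lc mn by (simp add: field_simps)
  have "real_of_int n \<noteq> 0" using mn by simp
  then have "ln (w y) = q * la" using e by simp
  moreover have "ln s' < q * la" "q * la < ln \<rho>" using q la by (auto simp: field_simps)
  ultimately have "ln s' < ln (w y)" "ln (w y) < ln \<rho>" by auto
  then have "s' < w y" "w y < \<rho>" using wy s' r by auto
  then show ?thesis using s' by (intro exI[of _ y]) auto
qed



lemma split_poly: fixes p :: "'b::field poly"
  assumes ac: "alg_closed_field TYPE('b)" and lc: "lead_coeff p = 1"
  shows "\<exists>es. length es = degree p \<and> p = prod_list (map (\<lambda>e. [:-e, 1:]) es)"
  using lc
proof (induction "degree p" arbitrary: p)
  case 0
  then have "p = 1" by (metis coeff_pCons_0 degree_0_id one_pCons)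
  then show ?case by simp
next
  case (Suc n)
  then obtain z where "poly p z = 0" using ac unfolding alg_closed_field_def by (metis le_add1 plus_1_eq_Suc)
  then obtain q where q: "p = [:-z, 1:] * q" using poly_eq_0_iff_dvd by (metis dvdE)
  have q0: "q \<noteq> 0" using q Suc.prems by auto
  have "degree p = degree [:-z, 1:] + degree q" unfolding q by (rule degree_mult_eq) (use q0 in auto)
  then have dq: "degree q = n" using Suc.hyps(2) by simp
  have "lead_coeff p = lead_coeff [:-z, 1:] * lead_coeff q" unfolding q by (rule lead_coeff_mult)
  then have lq: "lead_coeff q = 1" using Suc.prems by simp
  obtain es where es: "length es = degree q" "q = prod_list (map (\<lambda>e. [:-e, 1:]) es)"
    using Suc.hyps(1)[OF dq[symmetric] lq] by blast
  show ?case using es q dq Suc.hyps(2) by (intro exI[of _ "z # es"]) auto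
qed

definition bd :: "('b::field \<Rightarrow> real) \<Rightarrow> 'b poly \<Rightarrow> bool" where
  "bd w p \<longleftrightarrow> (\<forall>j. w (coeff p j) \<le> 1)"

lemma bd_mult: assumes na: "nonarch_abs w" and "bd w p" "bd w q" shows "bd w (p * q)"
  unfolding bd_def
proof
  fix n
  show "w (coeff (p * q) n) \<le> 1" unfolding coeff_mult
    using assms unfolding bd_def
    by (intro wsum[OF na]) (auto simp: wmult[OF na] intro: mult_le_one wnn[OF na])
qed

lemma bd_lin: assumes na: "nonarch_abs w" and "w c \<le> 1" shows "bd w [:-c, 1:]"
  unfolding bd_def
proof
  fix j show "w (coeff [:-c, 1:] j) \<le> 1"
    using assms by (cases j) (auto simp: coeff_pCons wneg[OF na] w1[OF na] w0[OF na] split: nat.split)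
qed

lemma bd_prod: assumes na: "nonarch_abs w" and "\<And>c. c \<in> set cs \<Longrightarrow> w c \<le> 1"
  shows "bd w (prod_list (map (\<lambda>e. [:-e, 1:]) cs))"
  using assms(2)
proof (induction cs)
  case Nil then show ?case by (simp add: bd_def w1[OF na] w0[OF na] coeff_1)
next
  case (Cons a cs)
  have "bd w ([:-a, 1:] * prod_list (map (\<lambda>e. [:-e, 1:]) cs))"
    using Cons by (intro bd_mult[OF na] bd_lin[OF na]) auto
  then show ?case by (simp del: mult_pCons_left)
qed



lemma poly_lin_prod: "poly (prod_list (map (\<lambda>e. [:-e, 1:]) cs)) (z::'b::field) = prod_list (map (\<lambda>e. z - e) cs)"
  by (induction cs) (auto simp: algebra_simps)

theorem mainTheorem9:
  fixes v :: "'a::field_char_0 \<Rightarrow> real" and f :: "'a poly" and d :: nat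
    and w :: "'b::field \<Rightarrow> real" and \<sigma> :: "'a \<Rightarrow> 'b"
  assumes "admissible_place v"
    and "not_above_small_primes v d"
    and "d \<ge> 3" and "degree f = d" and "lead_coeff f = 1"
    and "poly f 0 = 0" and "poly (pderiv f) 0 = 0"
    and "\<exists>j. v (coeff f j) > 1"
    and "alg_closed_field TYPE('b)" and "nonarch_abs w" and "complete_wrt w"
    and "valued_embedding v w \<sigma>"
  shows "(\<forall>i\<ge>1.
            splitting_radius w d (poly (map_poly \<sigma> f)) / (real d - 1) ^ i
              \<le> annulus_mod (B_radius w d (poly (map_poly \<sigma> f)) i)
                            (B_radius w d (poly (map_poly \<sigma> f)) (i + 1))
          \<and> annulus_mod (B_radius w d (poly (map_poly \<sigma> f)) i)
                            (B_radius w d (poly (map_poly \<sigma> f)) (i + 1))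
              \<le> (real d - 1) * splitting_radius w d (poly (map_poly \<sigma> f)) / 2 ^ (i + 1))
       \<and> splitting_radius w d (poly (map_poly \<sigma> f))
           \<le> annulus_mod (exp (splitting_radius w d (poly (map_poly \<sigma> f))))
                         (B_radius w d (poly (map_poly \<sigma> f)) 1)
       \<and> annulus_mod (exp (splitting_radius w d (poly (map_poly \<sigma> f))))
                         (B_radius w d (poly (map_poly \<sigma> f)) 1)
           \<le> (real d - 1) * splitting_radius w d (poly (map_poly \<sigma> f)) / 2"
proof -
  note adm = assms(1) and nsp = assms(2) and d3 = assms(3) and degf = assms(4) and lcf = assms(5)
    and f0 = assms(6) and df0 = assms(7) and bad = assms(8) and ac = assms(9) and na = assms(10)
    and emb = assms(12)
  have npv: "nonarch_place v" using adm unfolding admissible_place_def by blast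
  have s1: "\<sigma> 1 = 1" and sadd: "\<And>x y. \<sigma> (x + y) = \<sigma> x + \<sigma> y" and smul: "\<And>x y. \<sigma> (x * y) = \<sigma> x * \<sigma> y"
    and sw: "\<And>x. w (\<sigma> x) = v x" using emb unfolding valued_embedding_def by auto
  have s0: "\<sigma> 0 = 0" using sadd[of 0 0] add_cancel_right_right[of "\<sigma> 0" "\<sigma> 0"] by simp
  have sinj: "\<sigma> x \<noteq> 0" if "x \<noteq> 0" for x
  proof
    assume "\<sigma> x = 0"
    then have "\<sigma> (x * inverse x) = 0" using smul by simp
    then show False using that s1 by simp
  qed
  have snat: "\<sigma> (of_nat n) = of_nat n" for n by (induction n) (auto simp: s0 s1 sadd)
  define P where "P = map_poly \<sigma> f"
  have cP: "coeff P j = \<sigma> (coeff f j)" for j unfolding P_def by (rule coeff_map_poly[of \<sigma>, OF s0])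
  have dP: "degree P = d" unfolding P_def using degf by (subst degree_map_poly) (use sinj in auto)
  have lP: "lead_coeff P = 1" using dP cP degf lcf s1 by simp
  have P0: "poly P 0 = 0" using cP[of 0] f0 s0 by (simp add: poly_0_coeff_0)
  have "coeff (pderiv f) 0 = coeff f 1" by (simp add: coeff_pderiv)
  then have "coeff f 1 = 0" using df0 by (simp add: poly_0_coeff_0)
  then have P1: "coeff P 1 = 0" using cP s0 by simp
  obtain Q1 where Q1: "P = [:0, 1:] * Q1" using P0 poly_eq_0_iff_dvd[of P 0] by (auto elim: dvdE)
  have "coeff Q1 0 = 0" using P1 unfolding Q1 by simp
  then obtain G where G: "Q1 = [:0, 1:] * G" using poly_eq_0_iff_dvd[of Q1 0] by (auto simp: poly_0_coeff_0 elim: dvdE)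
  have PG: "P = [:0, 1:] * ([:0, 1:] * G)" using Q1 G by simp
  have G0: "G \<noteq> 0" using PG lP by auto
  have "degree P = degree [:0, 1::'b:] + degree ([:0, 1:] * G)" unfolding PG by (rule degree_mult_eq) (use G0 in auto)
  also have "degree ([:0, 1::'b:] * G) = degree [:0, 1::'b:] + degree G" by (rule degree_mult_eq) (use G0 in auto)
  finally have dG: "degree G = d - 2" using dP by simp
  have "lead_coeff P = lead_coeff [:0, 1::'b:] * (lead_coeff [:0, 1::'b:] * lead_coeff G)"
    unfolding PG by (simp only: lead_coeff_mult)
  then have lG: "lead_coeff G = 1" using lP by simp
  obtain cs where cs: "length cs = d - 2" "G = prod_list (map (\<lambda>e. [:-e, 1:]) cs)"
    using split_poly[OF ac lG] dG by auto
  have Fdef: "poly P z = z * z * prod_list (map (\<lambda>c. z - c) cs)" for z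
    unfolding PG cs(2) by (simp add: poly_lin_prod)
  have split: "\<exists>es. \<forall>z. poly P z - y = prod_list (map (\<lambda>e. z - e) es)" for y
  proof -
    have deq: "degree (P + [:-y:]) = d" using dP d3 by (subst degree_add_eq_left) auto
    have "lead_coeff (P + [:-y:]) = 1" unfolding deq using lP dP d3 by (simp add: coeff_pCons split: nat.split)
    then obtain es where es: "P + [:-y:] = prod_list (map (\<lambda>e. [:-e, 1:]) es)" using split_poly[OF ac] by blast
    have "poly P z - y = prod_list (map (\<lambda>e. z - e) es)" for z
      using arg_cong[OF es, of "\<lambda>p. poly p z"] by (simp add: poly_lin_prod)
    then show ?thesis by blast
  qed
  have big: "\<exists>c\<in>set cs. w c > 1"
  proof (rule ccontr)
    assume "\<not> ?thesis"
    then have "\<And>c. c \<in> set cs \<Longrightarrow> w c \<le> 1" by auto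
    then have "bd w G" unfolding cs(2) by (rule bd_prod[OF na])
    moreover have "bd w [:0, 1:]" using bd_lin[OF na, of 0] w0[OF na] by simp
    ultimately have "bd w P" unfolding PG by (intro bd_mult[OF na])
    then have "v (coeff f j) \<le> 1" for j using cP sw unfolding bd_def by metis
    then show False using bad by (meson not_le)
  qed
  have na_v: "nonarch_abs v" using npv unfolding nonarch_place_def by blast
  have unit: "w (of_nat n :: 'b) = 1" if "1 \<le> n" "n \<le> d" for n
    using that
  proof (induction n rule: less_induct)
    case (less n)
    show ?case
    proof (cases "n = 1")
      case True then show ?thesis using w1[OF na] by simp
    next
      case False
      then obtain p where p: "prime p" "p dvd n" using prime_factor_nat by blast
      then obtain k where k: "n = p * k" by (auto elim: dvdE)
      have "k \<ge> 1" using k less.prems by (cases k) auto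
      have "p \<ge> 2" using p prime_ge_2_nat by blast
      then have "k < n" using k \<open>k \<ge> 1\<close> by simp
      have "p \<le> n" using k \<open>k \<ge> 1\<close> by simp
      have wp: "w (of_nat p :: 'b) = 1"
        using nsp p \<open>p \<le> n\<close> less.prems sw[of "of_nat p"] snat[of p] unfolding not_above_small_primes_def by auto
      have "w (of_nat k :: 'b) = 1" using less.IH[of k] \<open>k < n\<close> \<open>k \<ge> 1\<close> less.prems by simp
      then show ?thesis using wp k wmult[OF na] by simp
    qed
  qed
  have nt: "\<exists>x. w x \<noteq> 0 \<and> w x \<noteq> 1"
  proof -
    obtain x where "v x \<noteq> 0" "v x \<noteq> 1" using npv unfolding nonarch_place_def by blast
    then show ?thesis using sw by metis
  qed
  interpret S: setting w d cs "poly P"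
    apply unfold_locales
    subgoal by (rule na)
    subgoal for \<rho> s by (rule density[OF na ac nt])
    subgoal for n by (rule unit)
    subgoal by (rule d3)
    subgoal by (rule cs(1))
    subgoal for z by (rule Fdef)
    subgoal for y by (rule split)
    subgoal by (rule big)
    done
  show ?thesis using S.final unfolding P_def .
qed


end
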